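(* Let $\mathcal{D}\subseteq[0,1]$ be a two-outcome forecast domain (a non-degenerate interval, identified with the probability of the first outcome). A pooling operator $\oplus$ on $\mathcal{D}$ (a binary operator on weighted forecasts) satisfies the following six axioms if and only if there is a continuous, strictly increasing function $g:\mathcal{D}\to\mathbb{R}$ such that $\oplus=\oplus_g$ (i.e., for all weighted forecasts $\Pi_1,\dots,\Pi_m$, $\Pi_1\oplus\cdots\oplus\Pi_m=\bigoplus_{g,i=1}^m\Pi_i$): (1) Weight additivity: $\mathrm{wt}(\Pi_1\oplus\Pi_2)=\mathrm{wt}(\Pi_1)+\mathrm{wt}(\Pi_2)$ for all $\Pi_1,\Pi_2$. (2) Commutativity: $\Pi_1\oplus\Pi_2=\Pi_2\oplus\Pi_1$ for all $\Pi_1,\Pi_2$. (3) Associativity: $\Pi_1\oplus(\Pi_2\oplus\Pi_3)=(\Pi_1\oplus\Pi_2)\oplus\Pi_3$ for all $\Pi_1,\Pi_2,\Pi_3$. (4) Continuity: for all $p_1,p_2\in\mathcal{D}$, $\mathrm{pr}((p_1,w_1)\oplus(p_2,w_2))$ is a continuous function of $(w_1,w_2)$ on $\mathbb{R}_{\ge0}^2\setminus\{(0,0)\}$, with the convention $(p,w)\oplus(q,0)=(q,0)\oplus(p,w)=(p,w)$. (5) Idempotence: if $\mathrm{pr}(\Pi_1)=\mathrm{pr}(\Pi_2)$ then $\mathrm{pr}(\Pi_1\oplus\Pi_2)=\mathrm{pr}(\Pi_1)$. (6) Monotonicity: for every $w>0$ and $p_1>p_2$ in $\mathcal{D}$, the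 quantity $\mathrm{pr}((p_1,x)\oplus(p_2,w-x))$ is a strictly increasing function of $x\in(0,w)$.
   Context: A weighted forecast is a pair $\Pi=(p,w)\in\mathcal{D}\times\mathbb{R}_{>0}$, with $\mathrm{pr}(\Pi):=p$ and $\mathrm{wt}(\Pi):=w$. A pooling operator is a binary operator on weighted forecasts; when associative, $\Pi_1\oplus\cdots\oplus\Pi_m$ is well defined without parentheses. For a continuous strictly increasing $g:\mathcal{D}\to\mathbb{R}$, the quasi-arithmetic pool with respect to $g$ is \[\bigoplus_{g,\,i=1}^m (p_i,w_i):=\Big(g^{-1}\Big(\tfrac{\sum_i w_i g(p_i)}{\sum_i w_i}\Big),\ \sum_i w_i\Big).\] *)

theory Defs
  imports "HOL-Analysis.Analysis"
begin

text \<open>A weighted forecast on a two-outcome domain D is a pair (p, w) with p in D and w > 0.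
  pr = fst, wt = snd.\<close>

type_synonym wforecast = "real \<times> real"

definition is_wf :: "real set \<Rightarrow> wforecast \<Rightarrow> bool" where
  "is_wf D F \<longleftrightarrow> fst F \<in> D \<and> snd F > 0"

definition pooling_operator :: "real set \<Rightarrow> (wforecast \<Rightarrow> wforecast \<Rightarrow> wforecast) \<Rightarrow> bool" where
  "pooling_operator D op \<longleftrightarrow> (\<forall>F1 F2. is_wf D F1 \<longrightarrow> is_wf D F2 \<longrightarrow> is_wf D (op F1 F2))"

definition pool_list :: "(wforecast \<Rightarrow> wforecast \<Rightarrow> wforecast) \<Rightarrow> wforecast list \<Rightarrow> wforecast" where
  "pool_list op xs = foldl op (hd xs) (tl xs)"

definition qa_pool :: "real set \<Rightarrow> (real \<Rightarrow> real) \<Rightarrow> wforecast list \<Rightarrow> wforecast" where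
  "qa_pool D g xs =
     (inv_into D g ((\<Sum>F\<leftarrow>xs. snd F * g (fst F)) / (\<Sum>F\<leftarrow>xs. snd F)),
      (\<Sum>F\<leftarrow>xs. snd F))"

text \<open>pr((p1,w1) \<oplus> (p2,w2)) extended to zero weights by the convention
  (p,w) \<oplus> (q,0) = (q,0) \<oplus> (p,w) = (p,w).\<close>
definition ext_pr :: "(wforecast \<Rightarrow> wforecast \<Rightarrow> wforecast) \<Rightarrow> real \<Rightarrow> real \<Rightarrow> real \<times> real \<Rightarrow> real" where
  "ext_pr op p1 p2 ww =
     (if snd ww = 0 then p1 else if fst ww = 0 then p2 else fst (op (p1, fst ww) (p2, snd ww)))"

definition six_axioms :: "real set \<Rightarrow> (wforecast \<Rightarrow> wforecast \<Rightarrow> wforecast) \<Rightarrow> bool" where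
  "six_axioms D op \<longleftrightarrow>
     \<comment> \<open>(1) weight additivity\<close>
     (\<forall>F1 F2. is_wf D F1 \<longrightarrow> is_wf D F2 \<longrightarrow> snd (op F1 F2) = snd F1 + snd F2) \<and>
     \<comment> \<open>(2) commutativity\<close>
     (\<forall>F1 F2. is_wf D F1 \<longrightarrow> is_wf D F2 \<longrightarrow> op F1 F2 = op F2 F1) \<and>
     \<comment> \<open>(3) associativity\<close>
     (\<forall>F1 F2 F3. is_wf D F1 \<longrightarrow> is_wf D F2 \<longrightarrow> is_wf D F3 \<longrightarrow>
        op F1 (op F2 F3) = op (op F1 F2) F3) \<and>
     \<comment> \<open>(4) continuity\<close>
     (\<forall>p1\<in>D. \<forall>p2\<in>D. continuous_on {ww :: real \<times> real. fst ww \<ge> 0 \<and> snd ww \<ge> 0 \<and> ww \<noteq> (0, 0)}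
        (ext_pr op p1 p2)) \<and>
     \<comment> \<open>(5) idempotence\<close>
     (\<forall>F1 F2. is_wf D F1 \<longrightarrow> is_wf D F2 \<longrightarrow> fst F1 = fst F2 \<longrightarrow> fst (op F1 F2) = fst F1) \<and>
     \<comment> \<open>(6) monotonicity\<close>
     (\<forall>w > 0. \<forall>p1\<in>D. \<forall>p2\<in>D. p1 > p2 \<longrightarrow>
        strict_mono_on {0<..<w} (\<lambda>x. fst (op (p1, x) (p2, w - x))))"

end

theory Submission
  imports Defs
begin


lemma smono_ext01:
  fixes M :: "real \<Rightarrow> real"
  assumes cont: "continuous_on {0..1} M" and sm: "strict_mono_on {0<..<1} M"
  shows "strict_mono_on {0..1} M"
proof -
  have low: "M 0 \<le> M s" if s: "0 < s" "s < 1" for s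
  proof (rule ccontr)
    assume "\<not> M 0 \<le> M s"
    hence e: "M 0 - M s > 0" by simp
    from cont have "\<forall>x\<in>{0..1}. \<forall>e>0. \<exists>d>0. \<forall>x'\<in>{0..1}. dist x' x < d \<longrightarrow> dist (M x') (M x) < e"
      by (simp add: continuous_on_iff)
    then obtain d where d: "d > 0" "\<forall>x'\<in>{0..1}. dist x' 0 < d \<longrightarrow> dist (M x') (M 0) < M 0 - M s"
      using e by (meson atLeastAtMost_iff order_refl zero_le_one)
    define y where "y = min (d/2) (s/2)"
    have y: "0 < y" "y < s" "y < d" using d s by (auto simp: y_def)
    have "M y < M s" using sm y s by (auto simp: strict_mono_on_def)
    moreover have "dist (M y) (M 0) < M 0 - M s" using d y s by (auto simp: dist_real_def)
    ultimately show False by (auto simp: dist_real_def)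
  qed
  have high: "M s \<le> M 1" if s: "0 < s" "s < 1" for s
  proof (rule ccontr)
    assume "\<not> M s \<le> M 1"
    hence e: "M s - M 1 > 0" by simp
    from cont have "\<forall>x\<in>{0..1}. \<forall>e>0. \<exists>d>0. \<forall>x'\<in>{0..1}. dist x' x < d \<longrightarrow> dist (M x') (M x) < e"
      by (simp add: continuous_on_iff)
    then obtain d where d: "d > 0" "\<forall>x'\<in>{0..1}. dist x' 1 < d \<longrightarrow> dist (M x') (M 1) < M s - M 1"
      using e by (meson atLeastAtMost_iff order_refl zero_le_one)
    define y where "y = max (1 - d/2) ((1+s)/2)"
    have y: "s < y" "y < 1" "1 - y < d" using d s unfolding y_def max_def by (auto simp: field_simps)
    have "M s < M y" using sm y s by (auto simp: strict_mono_on_def)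
    moreover have "dist (M y) (M 1) < M s - M 1" using d y s by (auto simp: dist_real_def)
    ultimately show False by (auto simp: dist_real_def)
  qed
  have l2: "M 0 < M s" if "0 < s" "s < 1" for s
  proof -
    have "M 0 \<le> M (s/2)" using low that by auto
    also have "M (s/2) < M s" using sm that by (auto simp: strict_mono_on_def)
    finally show ?thesis .
  qed
  have h2: "M s < M 1" if "0 < s" "s < 1" for s
  proof -
    have "M s < M ((1+s)/2)" using sm that by (auto simp: strict_mono_on_def)
    also have "\<dots> \<le> M 1" using high that by auto
    finally show ?thesis .
  qed
  have "M 0 < M 1" using l2[of "1/2"] h2[of "1/2"] by simp
  show ?thesis unfolding strict_mono_on_def
  proof (intro allI impI)
    fix r s :: real assume "r \<in> {0..1} \<and> s \<in> {0..1} \<and> r < s"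
    hence rs: "0 \<le> r" "r < s" "s \<le> 1" by auto
    have "r = 0 \<or> 0 < r" "s = 1 \<or> s < 1" using rs by linarith+
    then show "M r < M s"
    proof (elim disjE)
      assume "0 < r" "s < 1" then show ?thesis using sm rs by (auto simp: strict_mono_on_def)
    qed (use \<open>M 0 < M 1\<close> l2 h2 rs in auto)
  qed
qed

lemma dense_const:
  fixes f :: "real \<Rightarrow> real"
  assumes cont: "continuous_on {0<..} f" and rat: "\<And>r. r \<in> \<rat> \<Longrightarrow> r > 0 \<Longrightarrow> f r = C"
    and l: "l > 0"
  shows "f l = C"
proof (rule ccontr)
  assume ne: "f l \<noteq> C"
  hence e: "\<bar>f l - C\<bar> > 0" by simp
  from cont l obtain d where d: "d > 0" "\<forall>x'\<in>{0<..}. dist x' l < d \<longrightarrow> dist (f x') (f l) < \<bar>f l - C\<bar>"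
    using e unfolding continuous_on_iff by (metis greaterThan_iff)
  obtain r where r: "r \<in> \<rat>" "l < r" "r < l + d" using Rats_dense_in_real[of l "l+d"] d by auto
  have "dist (f r) (f l) < \<bar>f l - C\<bar>" using d r l by (auto simp: dist_real_def)
  moreover have "f r = C" using rat r l by auto
  ultimately show False by (auto simp: dist_real_def)
qed

locale poolax =
  fixes D :: "real set" and op :: "wforecast \<Rightarrow> wforecast \<Rightarrow> wforecast"
  assumes pool: "pooling_operator D op" and ax: "six_axioms D op"
begin

lemma wf_op: "is_wf D F1 \<Longrightarrow> is_wf D F2 \<Longrightarrow> is_wf D (op F1 F2)"
  using pool unfolding pooling_operator_def by blast

lemma wt: "is_wf D F1 \<Longrightarrow> is_wf D F2 \<Longrightarrow> snd (op F1 F2) = snd F1 + snd F2"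
  using ax unfolding six_axioms_def by blast

lemma comm: "is_wf D F1 \<Longrightarrow> is_wf D F2 \<Longrightarrow> op F1 F2 = op F2 F1"
  using ax unfolding six_axioms_def by blast

lemma assoc: "is_wf D F1 \<Longrightarrow> is_wf D F2 \<Longrightarrow> is_wf D F3 \<Longrightarrow> op F1 (op F2 F3) = op (op F1 F2) F3"
  using ax unfolding six_axioms_def by blast

lemma idem: "is_wf D F1 \<Longrightarrow> is_wf D F2 \<Longrightarrow> fst F1 = fst F2 \<Longrightarrow> fst (op F1 F2) = fst F1"
  using ax unfolding six_axioms_def by blast

lemma cont: "p1 \<in> D \<Longrightarrow> p2 \<in> D \<Longrightarrow>
  continuous_on {ww :: real \<times> real. fst ww \<ge> 0 \<and> snd ww \<ge> 0 \<and> ww \<noteq> (0, 0)} (ext_pr op p1 p2)"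
  using ax unfolding six_axioms_def by blast

lemma mono: "w > 0 \<Longrightarrow> p1 \<in> D \<Longrightarrow> p2 \<in> D \<Longrightarrow> p1 > p2 \<Longrightarrow>
        strict_mono_on {0<..<w} (\<lambda>x. fst (op (p1, x) (p2, w - x)))"
  using ax unfolding six_axioms_def by blast

lemma wf_pair[simp]: "is_wf D (p, w) \<longleftrightarrow> p \<in> D \<and> w > 0"
  by (simp add: is_wf_def)

lemma merge: "p \<in> D \<Longrightarrow> a > 0 \<Longrightarrow> b > 0 \<Longrightarrow> op (p, a) (p, b) = (p, a + b)"
  using idem[of "(p,a)" "(p,b)"] wt[of "(p,a)" "(p,b)"] by (simp add: prod_eq_iff)

definition Q :: "real \<Rightarrow> real \<Rightarrow> real \<Rightarrow> real \<Rightarrow> wforecast" where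
  "Q c d a b = (if b = 0 then (d, a) else if a = 0 then (c, b) else op (d, a) (c, b))"

lemma Q_fst: "fst (Q c d a b) = ext_pr op d c (a, b)"
  by (simp add: Q_def ext_pr_def)

lemma Q_wf: "c \<in> D \<Longrightarrow> d \<in> D \<Longrightarrow> a \<ge> 0 \<Longrightarrow> b \<ge> 0 \<Longrightarrow> a + b > 0 \<Longrightarrow> is_wf D (Q c d a b)"
  by (auto simp: Q_def intro!: wf_op)

lemma Q_snd: "c \<in> D \<Longrightarrow> d \<in> D \<Longrightarrow> a \<ge> 0 \<Longrightarrow> b \<ge> 0 \<Longrightarrow> a + b > 0 \<Longrightarrow> snd (Q c d a b) = a + b"
  by (auto simp: Q_def wt)

lemma Qd: assumes "c \<in> D" "d \<in> D" "a \<ge> 0" "b \<ge> 0" "a + b > 0" "g > 0"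
  shows "op (Q c d a b) (d, g) = Q c d (a + g) b"
proof -
  consider "b = 0" | "b > 0" "a = 0" | "b > 0" "a > 0" using assms by linarith
  then show ?thesis
  proof cases
    case 1 then show ?thesis using assms by (simp add: Q_def merge)
  next
    case 2 then show ?thesis using assms by (simp add: Q_def comm)
  next
    case 3
    have "op (op (d, a) (c, b)) (d, g) = op (d, a) (op (c, b) (d, g))"
      using assms 3 by (simp add: assoc)
    also have "\<dots> = op (d, a) (op (d, g) (c, b))" using assms 3 by (simp add: comm)
    also have "\<dots> = op (op (d, a) (d, g)) (c, b)" using assms 3 by (simp add: assoc)
    also have "\<dots> = op (d, a + g) (c, b)" using assms 3 by (simp add: merge)
    finally show ?thesis using 3 assms by (simp add: Q_def)
  qed
qed

lemma Qc: assumes "c \<in> D" "d \<in> D" "a \<ge> 0" "b \<ge> 0" "a + b > 0" "g > 0"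
  shows "op (Q c d a b) (c, g) = Q c d a (b + g)"
proof -
  consider "a = 0" | "a > 0" "b = 0" | "b > 0" "a > 0" using assms by linarith
  then show ?thesis
  proof cases
    case 1 then show ?thesis using assms by (simp add: Q_def merge)
  next
    case 2 then show ?thesis using assms by (simp add: Q_def)
  next
    case 3
    have "op (op (d, a) (c, b)) (c, g) = op (d, a) (op (c, b) (c, g))"
      using assms 3 by (simp add: assoc)
    also have "\<dots> = op (d, a) (c, b + g)" using assms 3 by (simp add: merge)
    finally show ?thesis using 3 assms by (simp add: Q_def)
  qed
qed

lemma Qadd: assumes "c \<in> D" "d \<in> D" "a \<ge> 0" "b \<ge> 0" "a + b > 0"
   "a' \<ge> 0" "b' \<ge> 0" "a' + b' > 0"
  shows "op (Q c d a b) (Q c d a' b') = Q c d (a + a') (b + b')"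
proof -
  consider "b' = 0" | "b' > 0" "a' = 0" | "b' > 0" "a' > 0" using assms by linarith
  then show ?thesis
  proof cases
    case 1 then show ?thesis using assms Qd[of c d a b a'] by (simp add: Q_def)
  next
    case 2 then show ?thesis using assms Qc[of c d a b b'] by (simp add: Q_def)
  next
    case 3
    have "op (Q c d a b) (op (d, a') (c, b')) = op (op (Q c d a b) (d, a')) (c, b')"
      using assms 3 Q_wf by (simp add: assoc)
    also have "\<dots> = Q c d (a + a') (b + b')"
      using assms 3 Qd Qc by simp
    finally show ?thesis using 3 by (simp add: Q_def)
  qed
qed

end



context poolax begin

lemma Q_nat: assumes "c \<in> D" "d \<in> D" "a \<ge> 0" "b \<ge> 0" "a + b > 0"
  shows "fst (Q c d (real (Suc n) * a) (real (Suc n) * b)) = fst (Q c d a b)"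
proof (induction n)
  case 0 then show ?case by simp
next
  case (Suc n)
  have e: "real (Suc (Suc n)) * a = real (Suc n) * a + a" "real (Suc (Suc n)) * b = real (Suc n) * b + b"
    by (simp_all add: algebra_simps)
  have pos: "real (Suc n) * a + real (Suc n) * b > 0"
  proof -
    have "a * real n \<ge> 0" "b * real n \<ge> 0" using assms by simp_all
    moreover have "real (Suc n) * a + real (Suc n) * b = (a + b) + (a * real n + b * real n)"
      by (simp add: algebra_simps)
    ultimately show ?thesis using assms by linarith
  qed
  have "Q c d (real (Suc (Suc n)) * a) (real (Suc (Suc n)) * b)
      = op (Q c d (real (Suc n) * a) (real (Suc n) * b)) (Q c d a b)"
    unfolding e using assms pos by (intro Qadd[symmetric]) auto
  then show ?case using Suc assms pos
    by (simp add: idem Q_wf)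
qed

lemma Q_rat: assumes "c \<in> D" "d \<in> D" "a \<ge> 0" "b \<ge> 0" "a + b > 0" "r \<in> \<rat>" "r > 0"
  shows "fst (Q c d (r * a) (r * b)) = fst (Q c d a b)"
proof -
  obtain m n :: nat where mn: "n \<noteq> 0" "\<bar>r\<bar> = real m / real n"
    using Rats_abs_nat_div_natE[OF assms(6)] by metis
  have r: "r = real m / real n" using mn assms by simp
  have "m \<noteq> 0"
  proof
    assume "m = 0" then show False using r assms by simp
  qed
  then obtain m' n' where m': "m = Suc m'" "n = Suc n'" using mn by (metis not0_implies_Suc)
  define a' where "a' = a / real n"
  define b' where "b' = b / real n"
  have pos: "a' \<ge> 0" "b' \<ge> 0" "a' + b' > 0" using assms mn
    by (auto simp: a'_def b'_def add_divide_distrib[symmetric])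
  have "fst (Q c d (r * a) (r * b)) = fst (Q c d (real (Suc m') * a') (real (Suc m') * b'))"
    by (simp add: r a'_def b'_def m')
  also have "\<dots> = fst (Q c d a' b')" using Q_nat pos assms by blast
  also have "\<dots> = fst (Q c d (real (Suc n') * a') (real (Suc n') * b'))" using Q_nat pos assms by metis
  also have "\<dots> = fst (Q c d a b)" using mn by (simp add: a'_def b'_def m')
  finally show ?thesis .
qed

lemma Q_scale: assumes "c \<in> D" "d \<in> D" "a \<ge> 0" "b \<ge> 0" "a + b > 0" "l > 0"
  shows "fst (Q c d (l * a) (l * b)) = fst (Q c d a b)"
proof -
  have ct: "continuous_on {0<..} (\<lambda>l. ext_pr op d c (l * a, l * b))"
  proof (rule continuous_on_compose2[OF cont[of d c]])
    show "continuous_on {0<..} (\<lambda>l::real. (l * a, l * b))" by (intro continuous_intros)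
    show "(\<lambda>l. (l * a, l * b)) ` {0<..} \<subseteq> {ww. 0 \<le> fst ww \<and> 0 \<le> snd ww \<and> ww \<noteq> (0, 0)}"
      using assms by auto
  qed (use assms in auto)
  have "ext_pr op d c (l * a, l * b) = fst (Q c d a b)"
    by (rule dense_const[OF ct _ assms(6)]) (use Q_rat assms in \<open>auto simp: Q_fst\<close>)
  then show ?thesis by (simp add: Q_fst)
qed

definition Mf :: "real \<Rightarrow> real \<Rightarrow> real \<Rightarrow> real" where
  "Mf c d t = ext_pr op d c (t, 1 - t)"

lemma Q_M: assumes "c \<in> D" "d \<in> D" "a \<ge> 0" "b \<ge> 0" "a + b > 0"
  shows "fst (Q c d a b) = Mf c d (a / (a + b))"
proof -
  define t where "t = a / (a + b)"
  have t: "t \<ge> 0" "1 - t \<ge> 0" using assms by (auto simp: t_def field_simps)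
  have "a = (a + b) * t" "b = (a + b) * (1 - t)" using assms by (auto simp: t_def field_simps)
  then have "fst (Q c d a b) = fst (Q c d ((a + b) * t) ((a + b) * (1 - t)))" by simp
  also have "\<dots> = fst (Q c d t (1 - t))" using Q_scale assms t by simp
  finally show ?thesis by (simp add: Q_fst Mf_def t_def)
qed

end


context poolax begin
definition hh :: "real \<Rightarrow> real \<Rightarrow> real \<Rightarrow> real" where
  "hh c d = inv_into {0..1} (Mf c d)"
end

locale seg = poolax +
  fixes c d :: real
  assumes cD: "c \<in> D" and dD: "d \<in> D" and cd: "c < d"
begin

lemma Mf_0[simp]: "Mf c d 0 = c" and Mf_1[simp]: "Mf c d 1 = d"
  by (simp_all add: Mf_def ext_pr_def)

lemma Mf_open: "0 < t \<Longrightarrow> t < 1 \<Longrightarrow> Mf c d t = fst (op (d, t) (c, 1 - t))"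
  by (simp add: Mf_def ext_pr_def)

lemma Mf_cont: "continuous_on {0..1} (Mf c d)"
  unfolding Mf_def
proof (rule continuous_on_compose2[OF cont[OF dD cD]])
  show "continuous_on {0..1} (\<lambda>t::real. (t, 1 - t))" by (intro continuous_intros)
  show "(\<lambda>t::real. (t, 1 - t)) ` {0..1} \<subseteq> {ww. 0 \<le> fst ww \<and> 0 \<le> snd ww \<and> ww \<noteq> (0, 0)}"
  proof
    fix w assume "w \<in> (\<lambda>t::real. (t, 1 - t)) ` {0..1}"
    then obtain t :: real where t: "0 \<le> t" "t \<le> 1" "w = (t, 1 - t)" by auto
    then show "w \<in> {ww. 0 \<le> fst ww \<and> 0 \<le> snd ww \<and> ww \<noteq> (0, 0)}"
      by (cases "t = 0") auto
  qed
qed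

lemma Mf_smono: "strict_mono_on {0..1} (Mf c d)"
proof (rule smono_ext01[OF Mf_cont])
  have "strict_mono_on {0<..<1} (\<lambda>x. fst (op (d, x) (c, 1 - x)))"
    using mono[of 1 d c] cD dD cd by simp
  then show "strict_mono_on {0<..<1} (Mf c d)"
    unfolding strict_mono_on_def using Mf_open by auto
qed

lemma Mf_inj: "inj_on (Mf c d) {0..1}"
  using Mf_smono strict_mono_on_imp_inj_on by blast

lemma Mf_img: "Mf c d ` {0..1} = {c..d}"
proof
  show "Mf c d ` {0..1} \<subseteq> {c..d}"
  proof
    fix y assume "y \<in> Mf c d ` {0..1}"
    then obtain t where t: "t \<in> {0..1}" "y = Mf c d t" by auto
    have "Mf c d 0 \<le> Mf c d t" "Mf c d t \<le> Mf c d 1"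
      using t strict_mono_on_leD[OF Mf_smono, of 0 t] strict_mono_on_leD[OF Mf_smono, of t 1] by auto
    then show "y \<in> {c..d}" using t by simp
  qed
  show "{c..d} \<subseteq> Mf c d ` {0..1}"
  proof
    fix y assume y: "y \<in> {c..d}"
    then obtain t where "0 \<le> t" "t \<le> 1" "Mf c d t = y"
      using IVT'[of "Mf c d" 0 y 1, OF _ _ _ Mf_cont] by auto
    then show "y \<in> Mf c d ` {0..1}" by force
  qed
qed

lemma hh_in: "p \<in> {c..d} \<Longrightarrow> hh c d p \<in> {0..1}"
  unfolding hh_def using Mf_img inv_into_into by metis

lemma Mf_hh: "p \<in> {c..d} \<Longrightarrow> Mf c d (hh c d p) = p"
  unfolding hh_def using Mf_img f_inv_into_f by metis

lemma hh_Mf: "t \<in> {0..1} \<Longrightarrow> hh c d (Mf c d t) = t"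
  unfolding hh_def using Mf_inj by simp

lemma hh_cont: "continuous_on {c..d} (hh c d)"
  using continuous_on_inv[OF Mf_cont compact_Icc, of "hh c d"] hh_Mf Mf_img by simp

lemma hh_smono: "strict_mono_on {c..d} (hh c d)"
  unfolding strict_mono_on_def
proof (intro allI impI)
  fix p q :: real assume pq: "p \<in> {c..d} \<and> q \<in> {c..d} \<and> p < q"
  show "hh c d p < hh c d q"
  proof (rule ccontr)
    assume "\<not> hh c d p < hh c d q"
    then have "Mf c d (hh c d q) \<le> Mf c d (hh c d p)"
      using strict_mono_on_leD[OF Mf_smono] hh_in pq by simp
    then show False using Mf_hh pq by simp
  qed
qed

lemma Q_pt: assumes "p \<in> {c..d}" "u > 0"
  shows "Q c d (u * hh c d p) (u * (1 - hh c d p)) = (p, u)"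
proof -
  have h: "hh c d p \<in> {0..1}" using hh_in assms by simp
  have pos: "u * hh c d p \<ge> 0" "u * (1 - hh c d p) \<ge> 0" "u * hh c d p + u * (1 - hh c d p) > 0"
    using h assms by (auto simp: algebra_simps)
  have "fst (Q c d (u * hh c d p) (u * (1 - hh c d p))) = p"
    using Q_M[OF cD dD pos] assms Mf_hh by (simp add: algebra_simps)
  moreover have "snd (Q c d (u * hh c d p) (u * (1 - hh c d p))) = u"
    using Q_snd[OF cD dD pos] by (simp add: algebra_simps)
  ultimately show ?thesis by (simp add: prod_eq_iff)
qed

lemma hh_rep: assumes "p \<in> {c..d}" "q \<in> {c..d}" "u > 0" "v > 0"
  shows "fst (op (p, u) (q, v)) \<in> {c..d} \<and>
    hh c d (fst (op (p, u) (q, v))) = (u * hh c d p + v * hh c d q) / (u + v)"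
proof -
  let ?s = "hh c d p" and ?t = "hh c d q"
  have s: "?s \<in> {0..1}" and t: "?t \<in> {0..1}" using hh_in assms by auto
  have pos1: "u * ?s \<ge> 0" "u * (1 - ?s) \<ge> 0" "u * ?s + u * (1 - ?s) > 0"
    using s assms by (auto simp: algebra_simps)
  have pos2: "v * ?t \<ge> 0" "v * (1 - ?t) \<ge> 0" "v * ?t + v * (1 - ?t) > 0"
    using t assms by (auto simp: algebra_simps)
  have "op (p, u) (q, v) = Q c d (u * ?s + v * ?t) (u * (1 - ?s) + v * (1 - ?t))"
    using Qadd[OF cD dD pos1 pos2] Q_pt assms by simp
  moreover have AB: "u * ?s + v * ?t \<ge> 0" "u * (1 - ?s) + v * (1 - ?t) \<ge> 0"
    "(u * ?s + v * ?t) + (u * (1 - ?s) + v * (1 - ?t)) > 0"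
    using pos1 pos2 by linarith+
  moreover have "(u * ?s + v * ?t) + (u * (1 - ?s) + v * (1 - ?t)) = u + v"
    by (simp add: algebra_simps)
  ultimately have e: "fst (op (p, u) (q, v)) = Mf c d ((u * ?s + v * ?t) / (u + v))"
    using Q_M[OF cD dD AB] by simp
  have tau: "(u * ?s + v * ?t) / (u + v) \<in> {0..1}"
    using s t assms by (auto simp: field_simps intro: add_mono mult_left_le)
  show ?thesis using e tau Mf_img hh_Mf by auto
qed

end


context poolax begin

definition Rep :: "(real \<Rightarrow> real) \<Rightarrow> real \<Rightarrow> real \<Rightarrow> bool" where
  "Rep \<phi> c d \<longleftrightarrow> continuous_on {c..d} \<phi> \<and> strict_mono_on {c..d} \<phi> \<and>
     (\<forall>p\<in>{c..d}. \<forall>q\<in>{c..d}. \<forall>u>0. \<forall>v>0. \<phi> (fst (op (p, u) (q, v))) = (u * \<phi> p + v * \<phi> q) / (u + v))"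

lemma Rep_affine: assumes "Rep \<phi> c d" "A > 0" shows "Rep (\<lambda>x. A * \<phi> x + B) c d"
proof -
  have c: "continuous_on {c..d} (\<lambda>x. A * \<phi> x + B)"
    using assms unfolding Rep_def by (intro continuous_intros) auto
  have m: "strict_mono_on {c..d} (\<lambda>x. A * \<phi> x + B)"
    using assms unfolding Rep_def strict_mono_on_def by auto
  have "A * \<phi> (fst (op (p, u) (q, v))) + B = (u * (A * \<phi> p + B) + v * (A * \<phi> q + B)) / (u + v)"
    if "p \<in> {c..d}" "q \<in> {c..d}" "u > 0" "v > 0" for p q u v
  proof -
    have "\<phi> (fst (op (p, u) (q, v))) = (u * \<phi> p + v * \<phi> q) / (u + v)"
      using assms that unfolding Rep_def by blast
    then show ?thesis using that by (simp add: field_simps)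
  qed
  then show ?thesis using c m unfolding Rep_def by blast
qed

lemma Rep_sub: assumes "Rep \<phi> c' d'" "c' \<le> c" "d \<le> d'" shows "Rep \<phi> c d"
proof -
  have sub: "{c..d} \<subseteq> {c'..d'}" using assms by auto
  show ?thesis using assms(1) continuous_on_subset[OF _ sub] sub unfolding Rep_def strict_mono_on_def
    by blast
qed

end

context seg begin

lemma Rep_hh: "Rep (hh c d) c d"
  unfolding Rep_def using hh_cont hh_smono hh_rep by blast

lemma Rep_form: assumes "Rep \<phi> c d" "p \<in> {c..d}"
  shows "\<phi> p = \<phi> c + hh c d p * (\<phi> d - \<phi> c)"
proof -
  define t where "t = hh c d p"
  have t: "t \<in> {0..1}" "Mf c d t = p" using hh_in Mf_hh assms by (auto simp: t_def)
  consider "t = 0" | "t = 1" | "0 < t" "t < 1" using t by fastforce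
  then show ?thesis
  proof cases
    case 1 then have "hh c d p = 0" "p = c" using t by (auto simp: t_def)
    then show ?thesis by simp
  next
    case 2 then have "hh c d p = 1" "p = d" using t by (auto simp: t_def)
    then show ?thesis by simp
  next
    case 3
    have "p = fst (op (d, t) (c, 1 - t))" using t 3 Mf_open by simp
    moreover have "\<phi> (fst (op (d, t) (c, 1 - t))) = (t * \<phi> d + (1 - t) * \<phi> c) / (t + (1 - t))"
      using assms(1) 3 cd unfolding Rep_def by auto
    ultimately have e: "\<phi> p = t * \<phi> d + (1 - t) * \<phi> c" by simp
    have "hh c d p = t" by (simp add: t_def)
    then show ?thesis using e by (simp add: algebra_simps)
  qed
qed

lemma Rep_uniq: assumes "Rep \<phi> c d" "Rep \<psi> c d" "a \<in> {c..d}" "b \<in> {c..d}" "a < b"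
  "\<phi> a = \<psi> a" "\<phi> b = \<psi> b" "x \<in> {c..d}"
  shows "\<phi> x = \<psi> x"
proof -
  have lt: "hh c d a < hh c d b" using hh_smono assms unfolding strict_mono_on_def by blast
  have fa: "\<phi> a = \<phi> c + hh c d a * (\<phi> d - \<phi> c)" "\<psi> a = \<psi> c + hh c d a * (\<psi> d - \<psi> c)"
   and fb: "\<phi> b = \<phi> c + hh c d b * (\<phi> d - \<phi> c)" "\<psi> b = \<psi> c + hh c d b * (\<psi> d - \<psi> c)"
    using Rep_form assms by blast+
  have "(hh c d b - hh c d a) * (\<phi> d - \<phi> c) = (hh c d b - hh c d a) * (\<psi> d - \<psi> c)"
    using fa fb assms(6,7) by (simp add: algebra_simps)
  then have e1: "\<phi> d - \<phi> c = \<psi> d - \<psi> c" using lt by simp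
  then have e2: "\<phi> c = \<psi> c" using fa assms(6) by simp
  show ?thesis using Rep_form[OF assms(1,8)] Rep_form[OF assms(2,8)] e1 e2 by simp
qed

end

locale glob = poolax +
  fixes a b :: real
  assumes aD: "a \<in> D" and bD: "b \<in> D" and ab: "a < b" and intv: "is_interval D"
begin

lemma inD: "x \<in> D \<Longrightarrow> y \<in> D \<Longrightarrow> x \<le> z \<Longrightarrow> z \<le> y \<Longrightarrow> z \<in> D"
  using intv unfolding is_interval_1 by blast

definition G :: "real \<Rightarrow> real \<Rightarrow> real \<Rightarrow> real" where
  "G c d x = (hh c d x - hh c d a) / (hh c d b - hh c d a)"

lemma G_props: assumes "c \<in> D" "d \<in> D" "c \<le> a" "b \<le> d"
  shows "Rep (G c d) c d" "G c d a = 0" "G c d b = 1"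
proof -
  interpret seg D op c d using assms ab by unfold_locales auto
  have lt: "hh c d a < hh c d b" using hh_smono assms ab unfolding strict_mono_on_def by auto
  have "G c d = (\<lambda>x. (1 / (hh c d b - hh c d a)) * hh c d x + (- hh c d a / (hh c d b - hh c d a)))"
    unfolding G_def using lt by (intro ext) (simp add: diff_divide_distrib)
  moreover have "Rep (\<lambda>x. (1 / (hh c d b - hh c d a)) * hh c d x + (- hh c d a / (hh c d b - hh c d a))) c d"
    using Rep_affine[OF Rep_hh, of "1 / (hh c d b - hh c d a)" "- hh c d a / (hh c d b - hh c d a)"] lt
    by (simp only: divide_pos_pos diff_gt_0_iff_gt zero_less_one)
  ultimately show "Rep (G c d) c d" by simp
  show "G c d a = 0" by (simp add: G_def)
  show "G c d b = 1" using lt by (simp add: G_def)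
qed

lemma Gcons: assumes "c' \<in> D" "d' \<in> D" "c' \<le> c" "c \<le> a" "b \<le> d" "d \<le> d'" "c \<in> D" "d \<in> D"
  "x \<in> {c..d}"
  shows "G c' d' x = G c d x"
proof -
  interpret seg D op c d using assms ab by unfold_locales auto
  have c'a: "c' \<le> a" and bd': "b \<le> d'" using assms by linarith+
  have R1: "Rep (G c' d') c d" using G_props(1)[OF assms(1,2) c'a bd'] assms(3,6) by (rule Rep_sub)
  have R2: "Rep (G c d) c d" using G_props(1)[OF assms(7,8,4,5)] .
  have e1: "G c' d' a = G c d a" using G_props(2)[OF assms(1,2) c'a bd'] G_props(2)[OF assms(7,8,4,5)] by simp
  have e2: "G c' d' b = G c d b" using G_props(3)[OF assms(1,2) c'a bd'] G_props(3)[OF assms(7,8,4,5)] by simp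
  have ab': "a \<in> {c..d}" "b \<in> {c..d}" using assms ab by auto
  show ?thesis by (rule Rep_uniq[OF R1 R2 ab' ab e1 e2 assms(9)])
qed

definition gg :: "real \<Rightarrow> real" where
  "gg x = G (min a x) (max b x) x"

lemma gg_eq: assumes "c \<in> D" "d \<in> D" "c \<le> a" "b \<le> d" "x \<in> {c..d}"
  shows "gg x = G c d x"
proof -
  have xD: "x \<in> D" using inD[of c d x] assms by auto
  have m1: "min a x \<in> D" "max b x \<in> D" using xD aD bD by (simp_all add: min_def max_def)
  have m2: "c \<le> min a x" "min a x \<le> a" "b \<le> max b x" "max b x \<le> d" "x \<in> {min a x..max b x}"
    using assms by auto
  have "G c d x = G (min a x) (max b x) x"
    by (rule Gcons[OF assms(1,2) m2(1,2,3,4) m1 m2(5)])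
  then show ?thesis by (simp add: gg_def)
qed

lemma gg_rep: assumes "p \<in> D" "q \<in> D" "u > 0" "v > 0"
  shows "gg (fst (op (p, u) (q, v))) = (u * gg p + v * gg q) / (u + v)"
proof -
  define C where "C = min a (min p q)"
  define E where "E = max b (max p q)"
  have CE: "C \<in> D" "E \<in> D" "C \<le> a" "b \<le> E" using assms aD bD by (auto simp: C_def E_def min_def max_def)
  interpret seg D op C E using CE ab by unfold_locales auto
  have pq: "p \<in> {C..E}" "q \<in> {C..E}" by (auto simp: C_def E_def)
  have r: "fst (op (p, u) (q, v)) \<in> {C..E}" using hh_rep pq assms by blast
  have "G C E (fst (op (p, u) (q, v))) = (u * G C E p + v * G C E q) / (u + v)"
    using G_props(1)[OF CE] pq assms unfolding Rep_def by blast
  then show ?thesis using gg_eq[OF CE] r pq by simp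
qed

lemma gg_smono: "strict_mono_on D gg"
  unfolding strict_mono_on_def
proof (intro allI impI)
  fix p q :: real assume pq: "p \<in> D \<and> q \<in> D \<and> p < q"
  define C where "C = min a p"
  define E where "E = max b q"
  have CE: "C \<in> D" "E \<in> D" "C \<le> a" "b \<le> E" using pq aD bD by (auto simp: C_def E_def min_def max_def)
  have pq': "p \<in> {C..E}" "q \<in> {C..E}" using pq by (auto simp: C_def E_def)
  have sm: "strict_mono_on {C..E} (G C E)" using G_props(1)[OF CE] unfolding Rep_def by blast
  have "G C E p < G C E q" using strict_mono_onD[OF sm pq'] pq by simp
  then show "gg p < gg q" using gg_eq[OF CE] pq' by simp
qed

end


lemma loc_cont:
  fixes f :: "real \<Rightarrow> real"
  assumes "x \<in> S" "c \<le> x" "x \<le> d" "\<delta> > 0" "\<And>y. y \<in> S \<Longrightarrow> \<bar>y - x\<bar> < \<delta> \<Longrightarrow> y \<in> {c..d}"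
    "continuous_on (S \<inter> {c..d}) f"
  shows "continuous (at x within S) f"
proof -
  have "continuous (at x within (S \<inter> {c..d})) f"
    using assms(6) continuous_on_eq_continuous_within[of "S \<inter> {c..d}" f] assms(1,2,3) by simp
  moreover have "at x within S = at x within (S \<inter> {c..d})"
  proof (rule at_within_nhd[of x "ball x \<delta>"])
    show "S \<inter> ball x \<delta> - {x} = S \<inter> {c..d} \<inter> ball x \<delta> - {x}"
      using assms(5) by (auto simp: dist_real_def abs_minus_commute)
  qed (use assms in auto)
  ultimately show ?thesis by simp
qed

context glob begin

lemma nbhd: assumes "x \<in> D"
  obtains c d \<delta> where "c \<in> D" "d \<in> D" "c \<le> min a x" "max b x \<le> d" "\<delta> > 0"
    "\<And>y. y \<in> D \<Longrightarrow> \<bar>y - x\<bar> < \<delta> \<Longrightarrow> y \<in> {c..d}"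
proof -
  obtain c \<delta>1 where c: "c \<in> D" "c \<le> min a x" "\<delta>1 > 0" "\<And>y. y \<in> D \<Longrightarrow> \<bar>y - x\<bar> < \<delta>1 \<Longrightarrow> c \<le> y"
  proof (cases "\<exists>y\<in>D. y < x")
    case True
    then obtain y0 where y0: "y0 \<in> D" "y0 < x" by blast
    show ?thesis
    proof (rule that[of "min a y0" "x - y0"])
      show "min a y0 \<in> D" using y0 aD by (simp add: min_def)
    qed (use y0 in auto)
  next
    case False
    show ?thesis
    proof (rule that[of "min a x" 1])
      show "min a x \<in> D" using assms aD by (simp add: min_def)
    qed (use False in \<open>auto simp: not_less\<close>)
  qed
  obtain d \<delta>2 where d: "d \<in> D" "max b x \<le> d" "\<delta>2 > 0" "\<And>y. y \<in> D \<Longrightarrow> \<bar>y - x\<bar> < \<delta>2 \<Longrightarrow> y \<le> d"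
  proof (cases "\<exists>y\<in>D. y > x")
    case True
    then obtain y0 where y0: "y0 \<in> D" "y0 > x" by blast
    show ?thesis
    proof (rule that[of "max b y0" "y0 - x"])
      show "max b y0 \<in> D" using y0 bD by (simp add: max_def)
    qed (use y0 in auto)
  next
    case False
    show ?thesis
    proof (rule that[of "max b x" 1])
      show "max b x \<in> D" using assms bD by (simp add: max_def)
    qed (use False in \<open>auto simp: not_less\<close>)
  qed
  show ?thesis
    by (rule that[OF c(1) d(1) c(2) d(2), of "min \<delta>1 \<delta>2"]) (use c d in auto)
qed

lemma gg_cont: "continuous_on D gg"
proof -
  have "continuous (at x within D) gg" if x: "x \<in> D" for x
  proof -
    obtain c d \<delta> where cd: "c \<in> D" "d \<in> D" "c \<le> min a x" "max b x \<le> d" "\<delta> > 0"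
      "\<And>y. y \<in> D \<Longrightarrow> \<bar>y - x\<bar> < \<delta> \<Longrightarrow> y \<in> {c..d}"
      using nbhd[OF x] by blast
    have c1: "c \<le> a" "b \<le> d" "c \<le> x" "x \<le> d" using cd by auto
    have "continuous_on {c..d} (G c d)" using G_props(1)[OF cd(1,2) c1(1,2)] unfolding Rep_def by blast
    then have "continuous_on (D \<inter> {c..d}) (G c d)" by (rule continuous_on_subset) auto
    moreover have "\<And>y. y \<in> D \<inter> {c..d} \<Longrightarrow> G c d y = gg y" using gg_eq[OF cd(1,2) c1(1,2)] by auto
    ultimately have "continuous_on (D \<inter> {c..d}) gg" using continuous_on_cong by blast
    then show ?thesis using loc_cont[OF x c1(3,4) cd(5,6)] by blast
  qed
  then show ?thesis using continuous_on_eq_continuous_within by blast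
qed

lemma gg_inj: "inj_on gg D"
  using gg_smono strict_mono_on_imp_inj_on by blast

lemma pool_rep: assumes "xs \<noteq> []" "\<forall>F\<in>set xs. is_wf D F"
  shows "fst (pool_list op xs) \<in> D \<and> snd (pool_list op xs) = (\<Sum>F\<leftarrow>xs. snd F) \<and>
    gg (fst (pool_list op xs)) = (\<Sum>F\<leftarrow>xs. snd F * gg (fst F)) / (\<Sum>F\<leftarrow>xs. snd F)"
  using assms
proof (induction xs rule: rev_induct)
  case Nil then show ?case by simp
next
  case (snoc F xs)
  show ?case
  proof (cases "xs = []")
    case True
    then show ?thesis using snoc.prems by (auto simp: pool_list_def is_wf_def)
  next
    case False
    have pl: "pool_list op (xs @ [F]) = op (pool_list op xs) F"
      using False by (cases xs) (auto simp: pool_list_def)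
    have IH: "fst (pool_list op xs) \<in> D" "snd (pool_list op xs) = (\<Sum>F\<leftarrow>xs. snd F)"
      "gg (fst (pool_list op xs)) = (\<Sum>F\<leftarrow>xs. snd F * gg (fst F)) / (\<Sum>F\<leftarrow>xs. snd F)"
      using snoc False by auto
    have Fwf: "fst F \<in> D" "snd F > 0" using snoc.prems by (auto simp: is_wf_def)
    have Wpos: "(\<Sum>F\<leftarrow>xs. snd F) > 0"
      using False snoc.prems
    proof (induction xs)
      case (Cons y ys) then show ?case
        by (cases "ys = []") (auto simp: is_wf_def add_pos_pos)
    qed simp
    define P where "P = pool_list op xs"
    have Pe: "P = (fst P, snd P)" by simp
    have wfP: "is_wf D P" using IH Wpos by (simp add: P_def is_wf_def)
    have wfF: "is_wf D F" using Fwf by (simp add: is_wf_def)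
    have "op P F = op (fst P, snd P) (fst F, snd F)" by simp
    have r1: "fst (op P F) \<in> D" using wf_op[OF wfP wfF] by (simp add: is_wf_def)
    have r2: "snd (op P F) = snd P + snd F" using wt[OF wfP wfF] .
    have PD: "fst P \<in> D" "snd P > 0" using IH Wpos by (simp_all add: P_def)
    have r3: "gg (fst (op P F)) = (snd P * gg (fst P) + snd F * gg (fst F)) / (snd P + snd F)"
      using gg_rep[OF PD(1) Fwf(1) PD(2) Fwf(2)] by simp
    show ?thesis using r1 r2 r3 IH Wpos Fwf
      by (simp add: pl P_def[symmetric] field_simps)
  qed
qed

lemma pool_qa: assumes "xs \<noteq> []" "\<forall>F\<in>set xs. is_wf D F"
  shows "pool_list op xs = qa_pool D gg xs"
proof -
  have r: "fst (pool_list op xs) \<in> D" "snd (pool_list op xs) = (\<Sum>F\<leftarrow>xs. snd F)"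
    "gg (fst (pool_list op xs)) = (\<Sum>F\<leftarrow>xs. snd F * gg (fst F)) / (\<Sum>F\<leftarrow>xs. snd F)"
    using pool_rep[OF assms] by auto
  have "inv_into D gg ((\<Sum>F\<leftarrow>xs. snd F * gg (fst F)) / (\<Sum>F\<leftarrow>xs. snd F)) = fst (pool_list op xs)"
    using r(3)[symmetric] r(1) gg_inj by simp
  then show ?thesis using r by (simp add: qa_pool_def prod_eq_iff)
qed

end


lemma avg_bounds:
  fixes w1 w2 y1 y2 :: real
  assumes "w1 \<ge> 0" "w2 \<ge> 0" "w1 + w2 > 0"
  shows "min y1 y2 \<le> (w1 * y1 + w2 * y2) / (w1 + w2) \<and> (w1 * y1 + w2 * y2) / (w1 + w2) \<le> max y1 y2"
proof -
  have "w1 * min y1 y2 \<le> w1 * y1" "w2 * min y1 y2 \<le> w2 * y2"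
    using assms by (simp_all add: mult_left_mono)
  then have l: "(w1 + w2) * min y1 y2 \<le> w1 * y1 + w2 * y2" by (simp add: algebra_simps)
  have "w1 * y1 \<le> w1 * max y1 y2" "w2 * y2 \<le> w2 * max y1 y2"
    using assms by (simp_all add: mult_left_mono)
  then have u: "w1 * y1 + w2 * y2 \<le> (w1 + w2) * max y1 y2" by (simp add: algebra_simps)
  show ?thesis using l u assms by (simp add: pos_le_divide_eq pos_divide_le_eq mult.commute)
qed

locale qa =
  fixes D :: "real set" and g :: "real \<Rightarrow> real" and op :: "wforecast \<Rightarrow> wforecast \<Rightarrow> wforecast"
  assumes intv: "is_interval D" and gc: "continuous_on D g" and gm: "strict_mono_on D g"
    and pool: "pooling_operator D op"
    and rep: "\<forall>xs. xs \<noteq> [] \<longrightarrow> (\<forall>F\<in>set xs. is_wf D F) \<longrightarrow> pool_list op xs = qa_pool D g xs"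
begin

abbreviation "\<Phi> \<equiv> inv_into D g"

lemma inD: "x \<in> D \<Longrightarrow> y \<in> D \<Longrightarrow> x \<le> z \<Longrightarrow> z \<le> y \<Longrightarrow> z \<in> D"
  using intv unfolding is_interval_1 by blast

lemma ginj: "inj_on g D" using gm strict_mono_on_imp_inj_on by blast

lemma op2: "is_wf D F1 \<Longrightarrow> is_wf D F2 \<Longrightarrow>
  op F1 F2 = (\<Phi> ((snd F1 * g (fst F1) + snd F2 * g (fst F2)) / (snd F1 + snd F2)), snd F1 + snd F2)"
proof -
  assume a: "is_wf D F1" "is_wf D F2"
  have "\<forall>F\<in>set [F1, F2]. is_wf D F" using a by simp
  then have "pool_list op [F1, F2] = qa_pool D g [F1, F2]" using rep by blast
  then show ?thesis by (simp add: pool_list_def qa_pool_def)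
qed

lemma Phi_g: "x \<in> D \<Longrightarrow> \<Phi> (g x) = x" by (rule inv_into_f_f[OF ginj])

lemma img: assumes "lo \<in> D" "hi \<in> D" "lo \<le> hi" shows "g ` {lo..hi} = {g lo..g hi}"
proof
  have sub: "{lo..hi} \<subseteq> D" using inD[OF assms(1,2)] by auto
  show "g ` {lo..hi} \<subseteq> {g lo..g hi}"
  proof
    fix y assume "y \<in> g ` {lo..hi}"
    then obtain x where x: "x \<in> {lo..hi}" "y = g x" by blast
    have xD: "x \<in> D" using x sub by blast
    have "g lo \<le> g x" "g x \<le> g hi"
      using strict_mono_on_leD[OF gm assms(1) xD] strict_mono_on_leD[OF gm xD assms(2)] x by auto
    then show "y \<in> {g lo..g hi}" using x by simp
  qed
  show "{g lo..g hi} \<subseteq> g ` {lo..hi}"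
  proof
    fix y assume y: "y \<in> {g lo..g hi}"
    have "continuous_on {lo..hi} g" using gc sub continuous_on_subset by blast
    moreover have "g lo \<le> y" "y \<le> g hi" using y by auto
    ultimately obtain x where "lo \<le> x" "x \<le> hi" "g x = y" using IVT'[of g lo y hi] assms(3) by blast
    then show "y \<in> g ` {lo..hi}" by force
  qed
qed

lemma avg_in: assumes "p1 \<in> D" "p2 \<in> D" "w1 \<ge> 0" "w2 \<ge> 0" "w1 + w2 > 0"
  shows "\<Phi> ((w1 * g p1 + w2 * g p2) / (w1 + w2)) \<in> {min p1 p2..max p1 p2} \<and>
         \<Phi> ((w1 * g p1 + w2 * g p2) / (w1 + w2)) \<in> D \<and>
         g (\<Phi> ((w1 * g p1 + w2 * g p2) / (w1 + w2))) = (w1 * g p1 + w2 * g p2) / (w1 + w2)"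
proof -
  let ?y = "(w1 * g p1 + w2 * g p2) / (w1 + w2)"
  have lohi: "min p1 p2 \<in> D" "max p1 p2 \<in> D" "min p1 p2 \<le> max p1 p2" using assms by (auto simp: min_def max_def)
  have "g (min p1 p2) = min (g p1) (g p2)" "g (max p1 p2) = max (g p1) (g p2)"
    using strict_mono_on_leD[OF gm, of p1 p2] strict_mono_on_leD[OF gm, of p2 p1] assms
    by (auto simp: min_def max_def)
  then have "?y \<in> {g (min p1 p2)..g (max p1 p2)}" using avg_bounds[OF assms(3,4,5)] by auto
  then obtain x where x: "x \<in> {min p1 p2..max p1 p2}" "g x = ?y" using img[OF lohi] by (metis imageE)
  have xD: "x \<in> D" using x inD[OF lohi(1,2)] by auto
  have "\<Phi> ?y = x" using x(2)[symmetric] xD Phi_g by simp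
  then show ?thesis using x xD by simp
qed

lemma wf_op: "is_wf D F1 \<Longrightarrow> is_wf D F2 \<Longrightarrow> is_wf D (op F1 F2)"
  using pool unfolding pooling_operator_def by blast

lemma ax1: "is_wf D F1 \<Longrightarrow> is_wf D F2 \<Longrightarrow> snd (op F1 F2) = snd F1 + snd F2"
  by (simp add: op2)

lemma ax2: "is_wf D F1 \<Longrightarrow> is_wf D F2 \<Longrightarrow> op F1 F2 = op F2 F1"
  by (simp add: op2 add.commute)

lemma ax5: "is_wf D F1 \<Longrightarrow> is_wf D F2 \<Longrightarrow> fst F1 = fst F2 \<Longrightarrow> fst (op F1 F2) = fst F1"
proof -
  assume a: "is_wf D F1" "is_wf D F2" "fst F1 = fst F2"
  then have "(snd F1 * g (fst F1) + snd F2 * g (fst F2)) / (snd F1 + snd F2) = g (fst F1)"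
    by (auto simp: is_wf_def field_simps)
  then show ?thesis using a op2 Phi_g by (simp add: is_wf_def)
qed

lemma ax3: assumes "is_wf D F1" "is_wf D F2" "is_wf D F3"
  shows "op F1 (op F2 F3) = op (op F1 F2) F3"
proof -
  obtain p1 w1 where F1: "F1 = (p1, w1)" by (cases F1)
  obtain p2 w2 where F2: "F2 = (p2, w2)" by (cases F2)
  obtain p3 w3 where F3: "F3 = (p3, w3)" by (cases F3)
  have h: "p1 \<in> D" "p2 \<in> D" "p3 \<in> D" "w1 > 0" "w2 > 0" "w3 > 0"
    using assms by (auto simp: F1 F2 F3 is_wf_def)
  have wf23: "is_wf D (op F2 F3)" and wf12: "is_wf D (op F1 F2)" using wf_op assms by auto
  have g23: "g (fst (op F2 F3)) = (w2 * g p2 + w3 * g p3) / (w2 + w3)"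
    using avg_in[of p2 p3 w2 w3] h op2[of "(p2, w2)" "(p3, w3)"] by (simp add: F2 F3 is_wf_def)
  have g12: "g (fst (op F1 F2)) = (w1 * g p1 + w2 * g p2) / (w1 + w2)"
    using avg_in[of p1 p2 w1 w2] h op2[of "(p1, w1)" "(p2, w2)"] by (simp add: F1 F2 is_wf_def)
  have s23: "snd (op F2 F3) = w2 + w3" and s12: "snd (op F1 F2) = w1 + w2"
    using ax1[OF assms(2,3)] ax1[OF assms(1,2)] by (simp_all add: F1 F2 F3)
  have L: "op F1 (op F2 F3) = (\<Phi> ((w1 * g p1 + w2 * g p2 + w3 * g p3) / (w1 + w2 + w3)), w1 + w2 + w3)"
  proof -
    have "op F1 (op F2 F3) = (\<Phi> ((w1 * g p1 + (w2 + w3) * ((w2 * g p2 + w3 * g p3) / (w2 + w3))) / (w1 + (w2 + w3))), w1 + (w2 + w3))"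
      using op2[OF assms(1) wf23] g23 s23 by (simp add: F1)
    also have "\<dots> = (\<Phi> ((w1 * g p1 + w2 * g p2 + w3 * g p3) / (w1 + w2 + w3)), w1 + w2 + w3)"
    proof -
      have "(w2 + w3) * ((w2 * g p2 + w3 * g p3) / (w2 + w3)) = w2 * g p2 + w3 * g p3" using h by simp
      then show ?thesis by (simp add: add.assoc)
    qed
    finally show ?thesis .
  qed
  have R: "op (op F1 F2) F3 = (\<Phi> ((w1 * g p1 + w2 * g p2 + w3 * g p3) / (w1 + w2 + w3)), w1 + w2 + w3)"
  proof -
    have "op (op F1 F2) F3 = (\<Phi> (((w1 + w2) * ((w1 * g p1 + w2 * g p2) / (w1 + w2)) + w3 * g p3) / ((w1 + w2) + w3)), (w1 + w2) + w3)"
      using op2[OF wf12 assms(3)] g12 s12 by (simp add: F3)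
    also have "\<dots> = (\<Phi> ((w1 * g p1 + w2 * g p2 + w3 * g p3) / (w1 + w2 + w3)), w1 + w2 + w3)"
    proof -
      have "(w1 + w2) * ((w1 * g p1 + w2 * g p2) / (w1 + w2)) = w1 * g p1 + w2 * g p2" using h by simp
      then show ?thesis by simp
    qed
    finally show ?thesis .
  qed
  show ?thesis using L R by simp
qed

lemma ax4: assumes "p1 \<in> D" "p2 \<in> D"
  shows "continuous_on {ww :: real \<times> real. fst ww \<ge> 0 \<and> snd ww \<ge> 0 \<and> ww \<noteq> (0, 0)} (ext_pr op p1 p2)"
proof -
  define S where "S = {ww :: real \<times> real. fst ww \<ge> 0 \<and> snd ww \<ge> 0 \<and> ww \<noteq> (0, 0)}"
  define lo where "lo = min p1 p2"
  define hi where "hi = max p1 p2"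
  have lohi: "lo \<in> D" "hi \<in> D" "lo \<le> hi" using assms by (auto simp: lo_def hi_def min_def max_def)
  have sub: "{lo..hi} \<subseteq> D" using inD[OF lohi(1,2)] by auto
  have pos: "fst ww + snd ww > 0" if "ww \<in> S" for ww
  proof -
    have "fst ww \<ge> 0" "snd ww \<ge> 0" "ww \<noteq> (0,0)" using that by (auto simp: S_def)
    then show ?thesis by (cases ww) (auto simp: add_nonneg_pos add_pos_nonneg)
  qed
  have cPhi: "continuous_on (g ` {lo..hi}) \<Phi>"
    by (rule continuous_on_inv) (use gc sub continuous_on_subset Phi_g in auto)
  have inner: "continuous_on S (\<lambda>ww. (fst ww * g p1 + snd ww * g p2) / (fst ww + snd ww))"
    using pos by (intro continuous_intros) (metis less_irrefl)
  have imgin: "(\<lambda>ww. (fst ww * g p1 + snd ww * g p2) / (fst ww + snd ww)) ` S \<subseteq> g ` {lo..hi}"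
  proof
    fix y assume "y \<in> (\<lambda>ww. (fst ww * g p1 + snd ww * g p2) / (fst ww + snd ww)) ` S"
    then obtain ww where ww: "ww \<in> S" "y = (fst ww * g p1 + snd ww * g p2) / (fst ww + snd ww)" by auto
    have "\<Phi> y \<in> {lo..hi}" "g (\<Phi> y) = y"
      using avg_in[OF assms, of "fst ww" "snd ww"] ww pos[OF ww(1)] by (auto simp: S_def lo_def hi_def)
    then show "y \<in> g ` {lo..hi}" by (metis imageI)
  qed
  have ch: "continuous_on S (\<lambda>ww. \<Phi> ((fst ww * g p1 + snd ww * g p2) / (fst ww + snd ww)))"
    by (rule continuous_on_compose2[OF cPhi inner imgin])
  have eq: "ext_pr op p1 p2 ww = \<Phi> ((fst ww * g p1 + snd ww * g p2) / (fst ww + snd ww))" if "ww \<in> S" for ww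
  proof -
    obtain x y where ww: "ww = (x, y)" by (cases ww)
    have xy: "x \<ge> 0" "y \<ge> 0" "x + y > 0" using that pos[OF that] by (auto simp: S_def ww)
    show ?thesis
    proof (cases "y = 0")
      case True then show ?thesis using xy assms Phi_g by (simp add: ext_pr_def ww)
    next
      case False
      show ?thesis
      proof (cases "x = 0")
        case True then show ?thesis using xy assms Phi_g False by (simp add: ext_pr_def ww)
      next
        case False2: False
        then have "x > 0" "y > 0" using xy False by auto
        then show ?thesis using op2[of "(p1, x)" "(p2, y)"] assms False False2
          by (simp add: ext_pr_def ww is_wf_def)
      qed
    qed
  qed
  have ce: "continuous_on S (ext_pr op p1 p2) = continuous_on S (\<lambda>ww. \<Phi> ((fst ww * g p1 + snd ww * g p2) / (fst ww + snd ww)))"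
    by (rule continuous_on_cong[OF refl eq])
  have "continuous_on S (ext_pr op p1 p2)" by (rule iffD2[OF ce ch])
  then show ?thesis unfolding S_def .
qed

lemma ax6: assumes "w > 0" "p1 \<in> D" "p2 \<in> D" "p1 > p2"
  shows "strict_mono_on {0<..<w} (\<lambda>x. fst (op (p1, x) (p2, w - x)))"
  unfolding strict_mono_on_def
proof (intro allI impI)
  fix x y :: real assume xy: "x \<in> {0<..<w} \<and> y \<in> {0<..<w} \<and> x < y"
  have gp: "g p2 < g p1" using gm assms unfolding strict_mono_on_def by blast
  let ?A = "\<lambda>x. (x * g p1 + (w - x) * g p2) / (x + (w - x))"
  have ex: "fst (op (p1, x) (p2, w - x)) = \<Phi> (?A x)" and ey: "fst (op (p1, y) (p2, w - y)) = \<Phi> (?A y)"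
    using op2[of "(p1, x)" "(p2, w - x)"] op2[of "(p1, y)" "(p2, w - y)"] xy assms by (auto simp: is_wf_def)
  have Axy: "?A x < ?A y"
  proof -
    have "x * g p1 + (w - x) * g p2 < y * g p1 + (w - y) * g p2"
    proof -
      have "(y - x) * g p2 < (y - x) * g p1" using xy gp by simp
      then show ?thesis by (simp add: algebra_simps)
    qed
    then show ?thesis using assms by (simp add: divide_strict_right_mono)
  qed
  have ix: "\<Phi> (?A x) \<in> D" "g (\<Phi> (?A x)) = ?A x"
    using avg_in[OF assms(2,3), of x "w - x"] xy by auto
  have iy: "\<Phi> (?A y) \<in> D" "g (\<Phi> (?A y)) = ?A y"
    using avg_in[OF assms(2,3), of y "w - y"] xy by auto
  show "fst (op (p1, x) (p2, w - x)) < fst (op (p1, y) (p2, w - y))"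
  proof (rule ccontr)
    assume "\<not> ?thesis"
    then have "\<Phi> (?A y) \<le> \<Phi> (?A x)" using ex ey by simp
    then have "g (\<Phi> (?A y)) \<le> g (\<Phi> (?A x))" using strict_mono_on_leD[OF gm] ix iy by blast
    then show False using ix iy Axy by simp
  qed
qed

lemma six: "six_axioms D op"
  unfolding six_axioms_def using ax1 ax2 ax3 ax4 ax5 ax6 by blast

end

theorem theorem6p6:
  fixes D :: "real set" and op :: "wforecast \<Rightarrow> wforecast \<Rightarrow> wforecast"
  assumes "is_interval D" and "D \<subseteq> {0..1}" and "\<exists>a\<in>D. \<exists>b\<in>D. a < b"
    and "pooling_operator D op"
  shows "six_axioms D op \<longleftrightarrow>
    (\<exists>g :: real \<Rightarrow> real. continuous_on D g \<and> strict_mono_on D g \<and>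
       (\<forall>xs. xs \<noteq> [] \<longrightarrow> (\<forall>F\<in>set xs. is_wf D F) \<longrightarrow> pool_list op xs = qa_pool D g xs))"
proof
  assume ax: "six_axioms D op"
  obtain a b where ab: "a \<in> D" "b \<in> D" "a < b" using assms(3) by blast
  interpret glob D op a b using ab ax assms(1,4) by unfold_locales auto
  show "\<exists>g :: real \<Rightarrow> real. continuous_on D g \<and> strict_mono_on D g \<and>
       (\<forall>xs. xs \<noteq> [] \<longrightarrow> (\<forall>F\<in>set xs. is_wf D F) \<longrightarrow> pool_list op xs = qa_pool D g xs)"
    using gg_cont gg_smono pool_qa by blast
next
  assume "\<exists>g :: real \<Rightarrow> real. continuous_on D g \<and> strict_mono_on D g \<and>
       (\<forall>xs. xs \<noteq> [] \<longrightarrow> (\<forall>F\<in>set xs. is_wf D F) \<longrightarrow> pool_list op xs = qa_pool D g xs)"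
  then obtain g where g: "continuous_on D g" "strict_mono_on D g"
    "\<forall>xs. xs \<noteq> [] \<longrightarrow> (\<forall>F\<in>set xs. is_wf D F) \<longrightarrow> pool_list op xs = qa_pool D g xs" by blast
  interpret qa D g op using g assms(1,4) by unfold_locales auto
  show "six_axioms D op" by (rule six)
qed


end
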